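(* Let $\Gamma$ be a Neumaier graph with parameters $(n,k,\lambda;a,c)$. Then the number of edges of $\Gamma$ is at least $$k(k-\lambda)+(k-c+1)(a-1)+\frac{(k-c+1)(\lambda-a+1)}{2}+\frac{(c-1)(c-2)}{2}.$$
   Context: All graphs are finite, simple, undirected and connected. A graph is edge-regular with parameters $(n,k,\lambda)$ if it has $n$ vertices, is $k$-regular, and any two adjacent vertices have exactly $\lambda$ common neighbours. A clique $C$ is a regular clique with nexus $a$ if every vertex not in $C$ has exactly $a$ neighbours in $C$. A Neumaier graph is a non-complete edge-regular graph containing a regular clique; it has parameters $(n,k,\lambda;a,c)$ if it is edge-regular with parameters $(n,k,\lambda)$ and contains a regular clique of size $c$ with nexus $a$. *)

theory Defs
  imports Complex_Main
begin

definition simple_graph :: "'a set \<Rightarrow> ('a \<Rightarrow> 'a \<Rightarrow> bool) \<Rightarrow> bool" where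
  "simple_graph V E \<longleftrightarrow> finite V \<and> (\<forall>u v. E u v \<longrightarrow> u \<in> V \<and> v \<in> V)
     \<and> (\<forall>u v. E u v \<longrightarrow> E v u) \<and> (\<forall>v. \<not> E v v)"

definition connected_graph :: "'a set \<Rightarrow> ('a \<Rightarrow> 'a \<Rightarrow> bool) \<Rightarrow> bool" where
  "connected_graph V E \<longleftrightarrow> V \<noteq> {} \<and> (\<forall>u\<in>V. \<forall>v\<in>V. E\<^sup>*\<^sup>* u v)"

definition neighbours :: "'a set \<Rightarrow> ('a \<Rightarrow> 'a \<Rightarrow> bool) \<Rightarrow> 'a \<Rightarrow> 'a set" where
  "neighbours V E v = {u \<in> V. E v u}"

definition edges :: "('a \<Rightarrow> 'a \<Rightarrow> bool) \<Rightarrow> 'a set set" where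
  "edges E = {{u, v} | u v. E u v}"

definition edge_regular :: "'a set \<Rightarrow> ('a \<Rightarrow> 'a \<Rightarrow> bool) \<Rightarrow> nat \<Rightarrow> nat \<Rightarrow> nat \<Rightarrow> bool" where
  "edge_regular V E n k lam \<longleftrightarrow> simple_graph V E \<and> card V = n
     \<and> (\<forall>v\<in>V. card (neighbours V E v) = k)
     \<and> (\<forall>u v. E u v \<longrightarrow> card (neighbours V E u \<inter> neighbours V E v) = lam)"

definition is_clique :: "'a set \<Rightarrow> ('a \<Rightarrow> 'a \<Rightarrow> bool) \<Rightarrow> 'a set \<Rightarrow> bool" where
  "is_clique V E C \<longleftrightarrow> C \<noteq> {} \<and> C \<subseteq> V \<and> (\<forall>u\<in>C. \<forall>v\<in>C. u \<noteq> v \<longrightarrow> E u v)"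

definition regular_clique :: "'a set \<Rightarrow> ('a \<Rightarrow> 'a \<Rightarrow> bool) \<Rightarrow> 'a set \<Rightarrow> nat \<Rightarrow> bool" where
  "regular_clique V E C a \<longleftrightarrow> is_clique V E C
     \<and> (\<forall>v \<in> V - C. card (neighbours V E v \<inter> C) = a)"

definition complete_graph :: "'a set \<Rightarrow> ('a \<Rightarrow> 'a \<Rightarrow> bool) \<Rightarrow> bool" where
  "complete_graph V E \<longleftrightarrow> (\<forall>u\<in>V. \<forall>v\<in>V. u \<noteq> v \<longrightarrow> E u v)"

definition neumaier_graph ::
  "'a set \<Rightarrow> ('a \<Rightarrow> 'a \<Rightarrow> bool) \<Rightarrow> nat \<Rightarrow> nat \<Rightarrow> nat \<Rightarrow> nat \<Rightarrow> nat \<Rightarrow> bool" where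
  "neumaier_graph V E n k lam a c \<longleftrightarrow> edge_regular V E n k lam \<and> connected_graph V E
     \<and> \<not> complete_graph V E \<and> (\<exists>C. regular_clique V E C a \<and> card C = c)"

end

theory Submission
  imports Defs
begin

lemma darts_le_edges:
  assumes fin: "finite V" and EV: "\<And>u v. E u v \<Longrightarrow> u \<in> V \<and> v \<in> V"
  shows "card {(u,v). E u v} \<le> 2 * card (edges E)"
proof -
  let ?D = "{(u,v). E u v}"
  have finD: "finite ?D" by (rule finite_subset[of _ "V \<times> V"]) (use EV fin in auto)
  have ed: "edges E = (\<lambda>(u,v). {u,v}) ` ?D" unfolding edges_def by auto
  have fe: "finite (edges E)" using ed finD by simp
  define g where "g e = (SOME p. e = {fst p, snd p} \<and> E (fst p) (snd p))" for e
  have g: "e = {fst (g e), snd (g e)} \<and> E (fst (g e)) (snd (g e))" if "e \<in> edges E" for e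
  proof -
    from that obtain u v where "e = {u,v}" "E u v" unfolding edges_def by auto
    then have "\<exists>p. e = {fst p, snd p} \<and> E (fst p) (snd p)" by (intro exI[of _ "(u,v)"]) auto
    then show ?thesis unfolding g_def by (rule someI_ex)
  qed
  have sub: "?D \<subseteq> g ` edges E \<union> prod.swap ` g ` edges E"
  proof
    fix p assume "p \<in> ?D"
    then obtain u v where p: "p = (u,v)" "E u v" by auto
    have e: "{u,v} \<in> edges E" using p unfolding edges_def by auto
    from g[OF e] have "{u,v} = {fst (g {u,v}), snd (g {u,v})}" by simp
    then have "g {u,v} = (u,v) \<or> g {u,v} = (v,u)"
      by (cases "g {u,v}") (auto simp: doubleton_eq_iff)
    then show "p \<in> g ` edges E \<union> prod.swap ` g ` edges E"
    proof
      assume "g {u,v} = (u,v)" then show ?thesis using e p by (metis UnI1 image_eqI)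
    next
      assume "g {u,v} = (v,u)" then have "prod.swap (g {u,v}) = (u,v)" by simp
      then show ?thesis using e p by (metis UnI2 image_eqI)
    qed
  qed
  have "card ?D \<le> card (g ` edges E \<union> prod.swap ` g ` edges E)"
    by (rule card_mono) (use sub fe in auto)
  also have "\<dots> \<le> card (g ` edges E) + card (prod.swap ` g ` edges E)" by (rule card_Un_le)
  also have "\<dots> \<le> card (edges E) + card (edges E)"
    by (intro add_mono card_image_le order.trans[OF card_image_le]) (use fe in auto)
  finally show ?thesis by simp
qed

theorem proposition3p8:
  fixes V :: "'a set" and E :: "'a \<Rightarrow> 'a \<Rightarrow> bool"
    and n k lam a c :: nat
  assumes "neumaier_graph V E n k lam a c"
  shows "real (card (edges E)) \<ge>
           real k * (real k - real lam)
         + (real k - real c + 1) * (real a - 1)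
         + (real k - real c + 1) * (real lam - real a + 1) / 2
         + (real c - 1) * (real c - 2) / 2"
proof -
  define nb where "nb v = neighbours V E v" for v
  from assms obtain C where er: "edge_regular V E n k lam" and rc: "regular_clique V E C a" and cC: "card C = c"
    unfolding neumaier_graph_def by auto
  have fin: "finite V" and EV: "\<And>u v. E u v \<Longrightarrow> u \<in> V \<and> v \<in> V"
    and sym: "\<And>u v. E u v \<Longrightarrow> E v u" and irr: "\<And>v. \<not> E v v"
    using er unfolding edge_regular_def simple_graph_def by auto
  have deg: "\<And>v. v \<in> V \<Longrightarrow> card (nb v) = k"
    and lm: "\<And>u v. E u v \<Longrightarrow> card (nb u \<inter> nb v) = lam"
    using er unfolding edge_regular_def nb_def by auto
  have nbE: "w \<in> nb v \<longleftrightarrow> E v w" for v w using EV unfolding nb_def neighbours_def by auto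
  have finnb: "finite (nb v)" for v unfolding nb_def neighbours_def using fin by auto
  have Cne: "C \<noteq> {}" and CV: "C \<subseteq> V" and cl: "\<And>u v. u \<in> C \<Longrightarrow> v \<in> C \<Longrightarrow> u \<noteq> v \<Longrightarrow> E u v"
    and nx: "\<And>v. v \<in> V - C \<Longrightarrow> card (nb v \<inter> C) = a"
    using rc unfolding regular_clique_def is_clique_def nb_def by auto
  have finC: "finite C" using CV fin finite_subset by blast
  obtain x where xC: "x \<in> C" using Cne by auto
  have xV: "x \<in> V" using xC CV by auto
  define N where "N = nb x"
  have cN: "card N = k" using deg xV N_def by simp
  have finN: "finite N" using finnb N_def by simp
  define D1 where "D1 = Sigma N nb"
  define D2 where "D2 = prod.swap ` Sigma N (\<lambda>u. nb u - N)"
  have cD1: "card D1 = k * k"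
  proof -
    have "card D1 = (\<Sum>u\<in>N. card (nb u))" unfolding D1_def by (rule card_SigmaI) (use finN finnb in auto)
    also have "\<dots> = (\<Sum>u\<in>N. k)" by (rule sum.cong) (use deg EV nbE N_def in auto)
    finally show ?thesis using cN by simp
  qed
  have lk: "lam \<le> k \<or> k = 0"
  proof (cases "N = {}")
    case True
    then have "k = 0" using cN by simp
    then show ?thesis by simp
  next
    case False
    then obtain u where "u \<in> N" by auto
    then have "E x u" using N_def nbE by auto
    then have "lam = card (nb x \<inter> nb u)" using lm by simp
    also have "\<dots> \<le> card (nb x)" by (rule card_mono) (use finnb in auto)
    finally show ?thesis using deg xV by simp
  qed
  have cD2: "card D2 = k * (k - lam)"
  proof -
    have "card D2 = card (Sigma N (\<lambda>u. nb u - N))" unfolding D2_def by (rule card_image) simp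
    also have "\<dots> = (\<Sum>u\<in>N. card (nb u - N))" by (rule card_SigmaI) (use finN finnb in auto)
    also have "\<dots> = (\<Sum>u\<in>N. k - lam)"
    proof (rule sum.cong)
      fix u assume u: "u \<in> N"
      then have Exu: "E x u" using N_def nbE by auto
      have "card (nb u - N) = card (nb u) - card (nb u \<inter> N)"
        by (rule card_Diff_subset_Int) (use finnb in auto)
      also have "\<dots> = k - lam" using deg[of u] EV[OF Exu] lm[OF Exu] N_def by (simp add: inf_commute)
      finally show "card (nb u - N) = k - lam" .
    qed simp
    finally show ?thesis using cN by simp
  qed
  have disj: "D1 \<inter> D2 = {}" unfolding D1_def D2_def by auto
  have subD: "D1 \<union> D2 \<subseteq> {(u,v). E u v}" unfolding D1_def D2_def using nbE sym by auto
  have finD: "finite {(u,v). E u v}" by (rule finite_subset[of _ "V \<times> V"]) (use EV fin in auto)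
  have "card D1 + card D2 = card (D1 \<union> D2)"
    by (rule card_Un_disjoint[symmetric]) (use finite_subset[OF _ finD] subD disj in auto)
  also have "\<dots> \<le> card {(u,v). E u v}" by (rule card_mono[OF finD subD])
  also have "\<dots> \<le> 2 * card (edges E)" by (rule darts_le_edges[OF fin EV])
  finally have main: "k * k + k * (k - lam) \<le> 2 * card (edges E)" using cD1 cD2 by simp
  define A where "A = C - {x}"
  define B where "B = N - C"
  have cA: "card A = c - 1" using A_def cC xC finC by simp
  have NC: "N \<inter> C = A" unfolding N_def A_def using cl xC irr nbE by auto
  have cB: "card B = k - (c - 1)"
  proof -
    have "card B = card N - card (N \<inter> C)" unfolding B_def
      by (rule card_Diff_subset_Int) (use finN in auto)
    then show ?thesis using NC cA cN by simp
  qed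
  have Ak: "c - 1 \<le> k"
  proof -
    have "A \<subseteq> N" using NC by auto
    then show ?thesis using card_mono[OF finN] cA cN by metis
  qed
  define P where "P = {(u,v) \<in> A \<times> B. E u v}"
  have finA: "finite A" using A_def finC by simp
  have finB: "finite B" using B_def finN by simp
  have P1: "card P = card B * (a - 1)"
  proof -
    have "P = prod.swap ` Sigma B (\<lambda>v. {u \<in> A. E v u})" unfolding P_def using sym by auto
    then have "card P = card (Sigma B (\<lambda>v. {u \<in> A. E v u}))" by (simp add: card_image)
    also have "\<dots> = (\<Sum>v\<in>B. card {u \<in> A. E v u})" by (rule card_SigmaI) (use finB finA in auto)
    also have "\<dots> = (\<Sum>v\<in>B. a - 1)"
    proof (rule sum.cong)
      fix v assume v: "v \<in> B"
      then have vV: "v \<in> V - C" and Exv: "E x v" using B_def N_def nbE EV by auto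
      have "nb v \<inter> C = insert x {u \<in> A. E v u}" using A_def xC nbE sym Exv by auto
      moreover have "x \<notin> {u \<in> A. E v u}" using A_def by auto
      moreover have "finite {u \<in> A. E v u}" using finA by auto
      ultimately have "card (nb v \<inter> C) = Suc (card {u \<in> A. E v u})" by simp
      then show "card {u \<in> A. E v u} = a - 1" using nx[OF vV] by simp
    qed simp
    finally show ?thesis by simp
  qed
  have P2: "card P = card A * (lam + 2 - c)"
  proof -
    have "P = Sigma A (\<lambda>u. {v \<in> B. E u v})" unfolding P_def by auto
    then have "card P = (\<Sum>u\<in>A. card {v \<in> B. E u v})" by (simp add: card_SigmaI finA finB)
    also have "\<dots> = (\<Sum>u\<in>A. lam + 2 - c)"
    proof (rule sum.cong)
      fix u assume u: "u \<in> A"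
      then have Exu: "E x u" and uC: "u \<in> C" and ux: "u \<noteq> x" using A_def cl xC by auto
      have "nb x \<inter> nb u = (A - {u}) \<union> {v \<in> B. E u v}"
        using A_def B_def N_def nbE cl uC xC irr sym by auto
      moreover have "(A - {u}) \<inter> {v \<in> B. E u v} = {}" using A_def B_def by auto
      ultimately have "card (nb x \<inter> nb u) = card (A - {u}) + card {v \<in> B. E u v}"
        using finA finB by (simp add: card_Un_disjoint)
      then have "lam = c - 2 + card {v \<in> B. E u v}" using lm[OF Exu] cA u finA by simp
      moreover have "card A > 0" using u finA card_gt_0_iff by blast
      then have "c \<ge> 2" using cA by simp
      ultimately show "card {v \<in> B. E u v} = lam + 2 - c" by simp
    qed simp
    finally show ?thesis by simp
  qed
  have apos: "a \<ge> 1" if Bne: "B \<noteq> {}"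
  proof -
    obtain v where v: "v \<in> B" using Bne by auto
    then have vV: "v \<in> V - C" and Exv: "E x v" using B_def N_def nbE EV by auto
    have "x \<in> nb v \<inter> C" using xC nbE sym Exv by auto
    then have "card (nb v \<inter> C) > 0" using finC card_gt_0_iff by blast
    then show ?thesis using nx[OF vV] by simp
  qed
  have c1: "c \<ge> 1" using cC finC Cne card_gt_0_iff by (metis Suc_leI One_nat_def)
  have rel: "(real k - real c + 1) * (real a - 1) = (real c - 1) * (real lam - real c + 2)"
  proof (cases "A = {}")
    case True
    then have "card P = 0" using P2 by simp
    then have "real (card B * (a - 1)) = 0" using P1 by simp
    moreover have "c = 1" using True cA c1 finA by simp
    ultimately show ?thesis using cB apos
      by (cases "B = {}") (auto simp: of_nat_diff)
  next
    case False
    then obtain u where u: "u \<in> A" by auto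
    then have Exu: "E x u" and uC: "u \<in> C" using A_def cl xC by auto
    have "A - {u} \<subseteq> nb x \<inter> nb u" using A_def cl uC xC nbE by auto
    then have "card (A - {u}) \<le> lam" using lm[OF Exu] card_mono finnb by (metis finite_Int)
    then have ge: "lam + 2 \<ge> c" using cA u finA by simp
    have eq: "real (card B * (a - 1)) = real (card A * (lam + 2 - c))" using P1 P2 by simp
    show ?thesis
    proof (cases "B = {}")
      case True
      then have "k = c - 1" using cB Ak by simp
      then have "c = 1 \<or> real lam - real c + 2 = 0" using eq True ge c1 cA by (auto simp add: of_nat_diff)
      then show ?thesis using \<open>k = c - 1\<close> c1 by (auto simp add: of_nat_diff)
    next
      case False
      have r1: "real (card B) = real k - real c + 1" using cB Ak c1 by (simp add: of_nat_diff)
      have r2: "real (a - 1) = real a - 1" using apos[OF False] by (simp add: of_nat_diff)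
      have r3: "real (card A) = real c - 1" using cA c1 by (simp add: of_nat_diff)
      have r4: "real (lam + 2 - c) = real lam - real c + 2" using ge by (simp add: of_nat_diff)
      show ?thesis using eq unfolding of_nat_mult r1 r2 r3 r4 .
    qed
  qed
  have ck: "real c - 1 \<le> real k" using Ak c1 by linarith
  have main': "real k * real k + real k * (real k - real lam) \<le> 2 * real (card (edges E))"
  proof (cases "k = 0")
    case True then show ?thesis by simp
  next
    case False
    then have "lam \<le> k" using lk by simp
    then have "real (k * k + k * (k - lam)) = real k * real k + real k * (real k - real lam)"
      by (simp add: of_nat_diff)
    moreover have "real (k * k + k * (k - lam)) \<le> real (2 * card (edges E))"
      using main by (rule of_nat_mono)
    ultimately show ?thesis using False by simp
  qed
  have iden: "real k * (real k - real lam)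
         + (real k - real c + 1) * (real a - 1)
         + (real k - real c + 1) * (real lam - real a + 1) / 2
         + (real c - 1) * (real c - 2) / 2 = (real k * real k + real k * (real k - real lam)) / 2"
  proof -
    have "(real k - real c + 1) * (real lam - real a + 1) = (real k - real c + 1) * real lam - (real k - real c + 1) * (real a - 1)"
      by (simp add: algebra_simps)
    then show ?thesis using rel by (simp add: field_simps)
  qed
  show ?thesis using main' unfolding iden by simp
qed

end
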